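(* Let $\mathcal{F} \subseteq \{0,1\}^n$ be a feasible set, let $c \in \mathbb{Z}^n$, and let $\ell \in \mathbb{Z}_+$. Let $c' \in \mathbb{Z}^n$ be the $\ell$-bit rounding of $c$, and let $x^\star \in \mathcal{F}$ be an optimal solution of $\max\{(c')^\top x : x \in \mathcal{F}\}$. Then $x^\star$ is $\frac{1}{2^{\ell-1}}$-optimal with respect to the original objective $c$ for the problem $\max\{c^\top x : x \in \mathcal{F}\}$.
   Context: Consider the binary program $\max\{c^\top x : x \in \mathcal{F}\}$ with $\mathcal{F} \subseteq \{0,1\}^n$ and $c = (c_1,\dots,c_n)^\top \in \mathbb{Z}^n$. For each $i \in [n] = \{1,\dots,n\}$, write $c_i = \mathrm{sgn}(c_i) \sum_{j=0}^{k_i-1} c_{ij} 2^j$, where $\mathrm{sgn}(c_i) \in \{0,\pm 1\}$ is the sign of $c_i$, $k_i = \lceil \log_2(|c_i|+1) \rceil$, and $c_{ij} \in \{0,1\}$ are the binary digits of $|c_i|$. For $\ell \in \mathbb{Z}_+$, the $\ell$-bit rounding of $c_i$ is $c'_i = \mathrm{sgn}(c_i) \sum_{j = k_i-\ell}^{k_i-1} c_{ij} 2^j$, i.e., the lowest $k_i - \ell$ bits of $|c_i|$ are set to zero and the top $\ell$ bits are kept (the sum starts at $j = \max(0, k_i-\ell)$; if $\ell \ge k_i$, then $c'_i = c_i$). The $\ell$-bit rounding of $c$ is $c' = (c'_1,\dots,c'_n)^\top$. For $\varepsilon \ge 0$, a feasible point $x^\star \in \mathcal{F}$ is called $\varepsilon$-optimal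 for the objective function $c$ if there exists $\tilde c \in \mathbb{R}^n$ such that, for all $j \in [n]$, $(1-\varepsilon)c_j \le \tilde c_j \le (1+\varepsilon)c_j$ if $c_j \ge 0$, and $(1+\varepsilon)c_j \le \tilde c_j \le (1-\varepsilon)c_j$ if $c_j < 0$, and $x^\star$ is an optimal solution of $\max\{\tilde c^\top x : x \in \mathcal{F}\}$. *)

theory Defs
  imports Complex_Main
begin

text \<open>Vectors in Z^n / {0,1}^n are represented as functions nat => int; only the
  coordinates i < n matter.\<close>

definition binary_set :: "nat \<Rightarrow> (nat \<Rightarrow> int) set" where
  "binary_set n = {x. (\<forall>i<n. x i \<in> {0,1}) \<and> (\<forall>i\<ge>n. x i = 0)}"

definition bitlen :: "int \<Rightarrow> nat" where
  "bitlen c = nat \<lceil>log 2 (real_of_int \<bar>c\<bar> + 1)\<rceil>"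

definition bitdigit :: "int \<Rightarrow> nat \<Rightarrow> int" where
  "bitdigit c j = (\<bar>c\<bar> div 2 ^ j) mod 2"

text \<open>l-bit rounding of c: sgn(c) * sum_{j = max(0,k-l)}^{k-1} c_j 2^j
  (nat subtraction k - l realises max(0, k-l)).\<close>
definition bit_round :: "nat \<Rightarrow> int \<Rightarrow> int" where
  "bit_round l c = sgn c * (\<Sum>j\<in>{bitlen c - l..<bitlen c}. bitdigit c j * 2 ^ j)"

definition bit_round_vec :: "nat \<Rightarrow> (nat \<Rightarrow> int) \<Rightarrow> (nat \<Rightarrow> int)" where
  "bit_round_vec l c = (\<lambda>i. bit_round l (c i))"

definition optimal_sol :: "nat \<Rightarrow> (nat \<Rightarrow> int) set \<Rightarrow> (nat \<Rightarrow> real) \<Rightarrow> (nat \<Rightarrow> int) \<Rightarrow> bool" where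
  "optimal_sol n F w xs \<longleftrightarrow> xs \<in> F \<and>
     (\<forall>x\<in>F. (\<Sum>j<n. w j * real_of_int (x j)) \<le> (\<Sum>j<n. w j * real_of_int (xs j)))"

definition eps_optimal :: "nat \<Rightarrow> (nat \<Rightarrow> int) set \<Rightarrow> (nat \<Rightarrow> int) \<Rightarrow> real \<Rightarrow> (nat \<Rightarrow> int) \<Rightarrow> bool" where
  "eps_optimal n F c \<epsilon> xs \<longleftrightarrow> xs \<in> F \<and>
     (\<exists>ct :: nat \<Rightarrow> real.
        (\<forall>j<n. (c j \<ge> 0 \<longrightarrow> (1 - \<epsilon>) * c j \<le> ct j \<and> ct j \<le> (1 + \<epsilon>) * c j) \<and>
               (c j < 0 \<longrightarrow> (1 + \<epsilon>) * c j \<le> ct j \<and> ct j \<le> (1 - \<epsilon>) * c j))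
        \<and> optimal_sol n F ct xs)"

end

theory Submission
  imports Defs
begin

lemma digsum: "(a::int) \<ge> 0 \<Longrightarrow> (\<Sum>j<k. (a div 2^j) mod 2 * 2^j) = a mod 2^k"
proof (induction k)
  case 0 then show ?case by simp
next
  case (Suc k)
  have "a mod (2^k * 2) = 2^k * (a div 2^k mod 2) + a mod 2^k"
    using mod_mult2_eq'[of a "2^k" 2] by simp
  then show ?case using Suc by (simp add: mult.commute)
qed

lemma bitlen_bounds:
  assumes "c \<noteq> 0"
  shows "bitlen c \<ge> 1" "2^(bitlen c - 1) \<le> \<bar>c\<bar>" "\<bar>c\<bar> < 2^bitlen c"
proof -
  define a where "a = \<bar>c\<bar>"
  have a1: "a \<ge> 1" using assms a_def by simp
  define L where "L = log 2 (real_of_int a + 1)"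
  have Lpos: "L > 0" using a1 unfolding L_def by simp
  have k: "bitlen c = nat \<lceil>L\<rceil>" unfolding bitlen_def L_def a_def by simp
  have cpos: "\<lceil>L\<rceil> \<ge> 1" using Lpos by (simp add: ceiling_less_iff le_ceiling_iff)
  show k1: "bitlen c \<ge> 1" using cpos k by linarith
  have rk: "real (bitlen c) = of_int \<lceil>L\<rceil>" using k cpos by simp
  have "real_of_int a + 1 = 2 powr L" unfolding L_def using a1 by simp
  also have "\<dots> \<le> 2 powr (real (bitlen c))" using rk by (simp add: le_of_int_ceiling)
  also have "\<dots> = 2 ^ bitlen c" by (simp add: powr_realpow)
  finally have "real_of_int a + 1 \<le> 2 ^ bitlen c" .
  hence "a + 1 \<le> 2 ^ bitlen c" by (metis of_int_le_iff of_int_numeral of_int_power of_int_1 of_int_add)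
  thus "\<bar>c\<bar> < 2^bitlen c" using a_def by simp
  have "real (bitlen c - 1) = real (bitlen c) - 1" using k1 by simp
  also have "\<dots> < L" using rk ceiling_less_iff[of L] by (simp add: ceiling_correct)
  finally have "2 powr real (bitlen c - 1) < 2 powr L" by simp
  hence "2 ^ (bitlen c - 1) < real_of_int a + 1" using a1 unfolding L_def by (simp add: powr_realpow)
  hence "2 ^ (bitlen c - 1) < a + 1" by (metis of_int_less_iff of_int_numeral of_int_power of_int_1 of_int_add)
  thus "2^(bitlen c - 1) \<le> \<bar>c\<bar>" using a_def by simp
qed

lemma round_eq:
  assumes "c \<noteq> 0"
  shows "bit_round l c = sgn c * (\<bar>c\<bar> - \<bar>c\<bar> mod 2^(bitlen c - l))"
proof -
  let ?k = "bitlen c" and ?f = "\<lambda>j. bitdigit c j * 2 ^ j"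
  have "sum ?f {0..<?k - l} + sum ?f {?k - l..<?k} = sum ?f {0..<?k}"
    by (rule sum.atLeastLessThan_concat) auto
  moreover have "sum ?f {0..<?k} = \<bar>c\<bar>"
    using digsum[of "\<bar>c\<bar>" ?k] bitlen_bounds[OF assms]
    by (simp add: bitdigit_def atLeast0LessThan)
  moreover have "sum ?f {0..<?k - l} = \<bar>c\<bar> mod 2^(?k - l)"
    using digsum[of "\<bar>c\<bar>" "?k - l"]
    by (simp add: bitdigit_def atLeast0LessThan)
  ultimately show ?thesis unfolding bit_round_def by simp
qed

lemma round_err:
  "\<bar>real_of_int c - real_of_int (bit_round l c)\<bar> \<le> (1 / 2 powr (real l - 1)) * \<bar>real_of_int c\<bar>"
proof (cases "c = 0")
  case True then show ?thesis by (simp add: bit_round_def)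
next
  case False
  let ?k = "bitlen c" and ?a = "\<bar>c\<bar>"
  define r where "r = ?a mod 2^(?k - l)"
  have "c - bit_round l c = sgn c * r" unfolding r_def round_eq[OF False]
    using False by (cases "c > 0") (auto simp: algebra_simps)
  hence d: "\<bar>real_of_int c - real_of_int (bit_round l c)\<bar> = real_of_int r"
    using False by (simp add: r_def abs_mult sgn_if flip: of_int_diff)
  have r0: "0 \<le> r" "r \<le> ?a" "r < 2^(?k - l)" unfolding r_def
    by (auto simp: zmod_le_nonneg_dividend)
  show ?thesis
  proof (cases "l = 0")
    case True
    then show ?thesis using d r0 by (simp add: powr_minus_divide)
  next
    case l1: False
    show ?thesis
    proof (cases "l \<le> ?k")
      case False
      hence "?k - l = 0" by simp
      hence "r = 0" using r_def by simp
      then show ?thesis using d by simp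
    next
      case True
      have p: "2 powr (real l - 1) = 2 ^ (l - 1)" using l1
        by (simp add: powr_realpow[symmetric] of_nat_diff)
      have q: "(2::real)^(?k - l) * 2^(l-1) = 2^(?k - 1)"
        using True l1 by (simp flip: power_add)
      have s1: "(2::real)^(?k - 1) \<le> real_of_int ?a"
        using bitlen_bounds(2)[OF False]
        by (metis of_int_le_iff of_int_numeral of_int_power)
      have s2: "real_of_int r \<le> 2^(?k - l)" using r0(3)
        by (metis less_imp_le of_int_le_iff of_int_numeral of_int_power)
      have "real_of_int r * 2 powr (real l - 1) = real_of_int r * 2^(l-1)" using p by simp
      also have "\<dots> \<le> 2^(?k - l) * 2^(l-1)"
        by (rule mult_right_mono[OF s2]) simp
      also have "\<dots> \<le> \<bar>real_of_int c\<bar>" using q s1 by simp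
      finally have "real_of_int r * 2 powr (real l - 1) \<le> \<bar>real_of_int c\<bar>" .
      then show ?thesis using d by (simp add: field_simps)
    qed
  qed
qed

lemma gen:
  fixes x y e :: real
  assumes "\<bar>x - y\<bar> \<le> e * \<bar>x\<bar>"
  shows "(0 \<le> x \<longrightarrow> (1 - e) * x \<le> y \<and> y \<le> (1 + e) * x) \<and>
         (x < 0 \<longrightarrow> (1 + e) * x \<le> y \<and> y \<le> (1 - e) * x)"
proof (cases "0 \<le> x")
  case True
  hence "\<bar>x - y\<bar> \<le> e * x" using assms by simp
  then show ?thesis using True by (simp add: algebra_simps abs_le_iff)
next
  case False
  hence "\<bar>x - y\<bar> \<le> - (e * x)" using assms by simp
  then show ?thesis using False by (simp add: algebra_simps abs_le_iff)
qed

theorem lemma1: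
  fixes n l :: nat and F :: "(nat \<Rightarrow> int) set" and c xs :: "nat \<Rightarrow> int"
  assumes "F \<subseteq> binary_set n"
    and "optimal_sol n F (\<lambda>j. real_of_int (bit_round_vec l c j)) xs"
  shows "eps_optimal n F c (1 / 2 powr (real l - 1)) xs"
  unfolding eps_optimal_def
proof (intro conjI exI)
  show "xs \<in> F" using assms(2) optimal_sol_def by blast
  show "optimal_sol n F (\<lambda>j. real_of_int (bit_round_vec l c j)) xs" by fact
  show "\<forall>j<n. (0 \<le> c j \<longrightarrow> (1 - 1 / 2 powr (real l - 1)) * real_of_int (c j) \<le> real_of_int (bit_round_vec l c j) \<and>
            real_of_int (bit_round_vec l c j) \<le> (1 + 1 / 2 powr (real l - 1)) * real_of_int (c j)) \<and>
           (c j < 0 \<longrightarrow> (1 + 1 / 2 powr (real l - 1)) * real_of_int (c j) \<le> real_of_int (bit_round_vec l c j) \<and>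
            real_of_int (bit_round_vec l c j) \<le> (1 - 1 / 2 powr (real l - 1)) * real_of_int (c j))"
  proof (intro allI impI)
    fix j
    have e: "\<bar>real_of_int (c j) - real_of_int (bit_round_vec l c j)\<bar> \<le> (1 / 2 powr (real l - 1)) * \<bar>real_of_int (c j)\<bar>"
      unfolding bit_round_vec_def by (rule round_err)
    show "(0 \<le> c j \<longrightarrow> (1 - 1 / 2 powr (real l - 1)) * real_of_int (c j) \<le> real_of_int (bit_round_vec l c j) \<and>
            real_of_int (bit_round_vec l c j) \<le> (1 + 1 / 2 powr (real l - 1)) * real_of_int (c j)) \<and>
           (c j < 0 \<longrightarrow> (1 + 1 / 2 powr (real l - 1)) * real_of_int (c j) \<le> real_of_int (bit_round_vec l c j) \<and>
            real_of_int (bit_round_vec l c j) \<le> (1 - 1 / 2 powr (real l - 1)) * real_of_int (c j))"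
      using e gen[of "real_of_int (c j)"] by simp
  qed
qed

end
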